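(* Let $y(t)$ solve $\dot y_k=v_k(Q(y))$, $k\in\mathcal{N}$, and let $x(t)=Q(y(t))$. If $p_k\in\mathcal{X}_k$ is dominated, or even iteratively dominated, then $p_k$ becomes extinct along $x(t)$, i.e. $\min\{x_{k\alpha}(t):\alpha\in\operatorname{supp}(p_k)\}\to0$ as $t\to\infty$.
   Context: Setting: a finite game with players $\mathcal{N}=\{1,\dots,N\}$, finite action sets $\mathcal{A}_k$, mixed strategies $\mathcal{X}_k=\Delta(\mathcal{A}_k)$, $\mathcal{X}=\prod_k\mathcal{X}_k$, multilinear expected payoffs $u_k$, payoff vectors $v_k(x)=(u_k(\alpha;x_{-k}))_{\alpha\in\mathcal{A}_k}$. Each player has a penalty function $h_k$ on $\mathcal{X}_k$ (continuous, $C^\infty$ on the relative interior of each face, strongly convex: $h(tx_1+(1-t)x_2)\le th(x_1)+(1-t)h(x_2)-\tfrac12Kt(1-t)\|x_1-x_2\|^2$ for some $K>0$), with choice map $Q_k(y_k)=\arg\max_{x_k\in\mathcal{X}_k}\{\langle y_k,x_k\rangle-h_k(x_k)\}$; $Q=(Q_k)_k$. $p_k$ is dominated by $p_k'$ if $u_k(p_k;x_{-k})<u_k(p_k';x_{-k})$ for all $x_{-k}\in\prod_{\ell\ne k}\mathcal{X}_\ell$. Iterated elimination: $\mathcal{A}_k^0=\mathcal{A}_k$; given $\mathcal{A}^r_\ell$, let $\mathcal{X}_\ell^r=\Delta(\mathcal{A}_\ell^r)$ and $\mathcal{A}_k^{r+1}$ be the actions in $\mathcal{A}_k^r$ not dominated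 (by some element of $\mathcal{X}_k^r$) against all $x_{-k}\in\prod_{\ell\ne k}\mathcal{X}_\ell^r$. $p_k$ is iteratively dominated if for some $r\ge0$, $p_k\in\mathcal{X}_k^r$ and there is $p_k'\in\mathcal{X}_k^r$ with $u_k(p_k';x_{-k})>u_k(p_k;x_{-k})$ for all $x_{-k}\in\prod_{\ell\ne k}\mathcal{X}_\ell^r$. *)

theory Defs
  imports "HOL-Analysis.Analysis"
begin

text \<open>Players form a finite type 'n; all actions live in one finite type 'a,
  player k's action set is a nonempty subset A k. A mixed strategy of player k is a
  vector in real^'a lying in the mixed_strats over A k (zero off A k). A pure payoff function
  u k s is given on pure profiles s (with s l in A l).\<close>

definition mixed_strats :: "'a::finite set \<Rightarrow> (real^'a) set" where
  "mixed_strats B = {x. (\<forall>\<alpha>. 0 \<le> x $ \<alpha>) \<and> (\<forall>\<alpha>. \<alpha> \<notin> B \<longrightarrow> x $ \<alpha> = 0)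
                 \<and> (\<Sum>\<alpha>\<in>UNIV. x $ \<alpha>) = 1}"

definition pure_strat :: "'a::finite \<Rightarrow> real^'a" where
  "pure_strat \<alpha> = (\<chi> \<beta>. if \<beta> = \<alpha> then 1 else 0)"

definition exp_payoff ::
  "('n::finite \<Rightarrow> 'a::finite set) \<Rightarrow> ('n \<Rightarrow> ('n \<Rightarrow> 'a) \<Rightarrow> real) \<Rightarrow> 'n \<Rightarrow> ('n \<Rightarrow> real^'a) \<Rightarrow> real" where
  "exp_payoff A u k x = (\<Sum>s\<in>PiE UNIV A. (\<Prod>l\<in>UNIV. x l $ s l) * u k s)"

definition payoff_vec ::
  "('n::finite \<Rightarrow> 'a::finite set) \<Rightarrow> ('n \<Rightarrow> ('n \<Rightarrow> 'a) \<Rightarrow> real) \<Rightarrow> 'n \<Rightarrow> ('n \<Rightarrow> real^'a) \<Rightarrow> real^'a" where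
  "payoff_vec A u k x = (\<chi> \<alpha>. if \<alpha> \<in> A k then exp_payoff A u k (x(k := pure_strat \<alpha>)) else 0)"

definition choice_map ::
  "('n \<Rightarrow> 'a::finite set) \<Rightarrow> ('n \<Rightarrow> real^'a \<Rightarrow> real) \<Rightarrow> 'n \<Rightarrow> real^'a \<Rightarrow> real^'a" where
  "choice_map A h k y = (THE x. x \<in> mixed_strats (A k) \<and>
      (\<forall>z\<in>mixed_strats (A k). inner y z - h k z \<le> inner y x - h k x))"

fun Cn_on :: "nat \<Rightarrow> ('v::real_normed_vector) set \<Rightarrow> ('v \<Rightarrow> real) \<Rightarrow> bool" where
  "Cn_on 0 U f = continuous_on U f"
| "Cn_on (Suc n) U f = (\<exists>f'. (\<forall>x\<in>U. (f has_derivative f' x) (at x)) \<and>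
        (\<forall>v. Cn_on n U (\<lambda>x. f' x v)))"

definition smooth_on :: "('v::real_normed_vector) set \<Rightarrow> ('v \<Rightarrow> real) \<Rightarrow> bool" where
  "smooth_on U f = (open U \<and> (\<forall>n. Cn_on n U f))"

text \<open>h is C^infinity on the set S (relatively open in its affine hull): it agrees on S
  with a C^infinity function on some open neighbourhood of S.\<close>
definition smooth_on_set :: "('v::real_normed_vector) set \<Rightarrow> ('v \<Rightarrow> real) \<Rightarrow> bool" where
  "smooth_on_set S h = (\<exists>U g. S \<subseteq> U \<and> smooth_on U g \<and> (\<forall>x\<in>S. g x = h x))"

text \<open>Penalty function on X_k = mixed_strats (A k): continuous, C^infinity on the relative interior
  of each face (faces are mixed_strats B for nonempty B \<subseteq> A k), strongly convex.\<close>
definition penalty_function :: "'a::finite set \<Rightarrow> (real^'a \<Rightarrow> real) \<Rightarrow> bool" where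
  "penalty_function Ak h =
     (continuous_on (mixed_strats Ak) h \<and>
      (\<forall>B. B \<subseteq> Ak \<and> B \<noteq> {} \<longrightarrow> smooth_on_set (rel_interior (mixed_strats B)) h) \<and>
      (\<exists>K>0. \<forall>x1\<in>mixed_strats Ak. \<forall>x2\<in>mixed_strats Ak. \<forall>t\<in>{0..1}.
          h (t *\<^sub>R x1 + (1 - t) *\<^sub>R x2) \<le> t * h x1 + (1 - t) * h x2
             - 1/2 * K * t * (1 - t) * (norm (x1 - x2))\<^sup>2))"

definition dominated_within ::
  "('n::finite \<Rightarrow> 'a::finite set) \<Rightarrow> ('n \<Rightarrow> ('n \<Rightarrow> 'a) \<Rightarrow> real) \<Rightarrow> ('n \<Rightarrow> 'a set) \<Rightarrow> 'n \<Rightarrow> real^'a \<Rightarrow> real^'a \<Rightarrow> bool" where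
  "dominated_within A u S k p p' =
     (\<forall>x. (\<forall>l. l \<noteq> k \<longrightarrow> x l \<in> mixed_strats (S l)) \<longrightarrow>
          exp_payoff A u k (x(k := p)) < exp_payoff A u k (x(k := p')))"

definition dominated ::
  "('n::finite \<Rightarrow> 'a::finite set) \<Rightarrow> ('n \<Rightarrow> ('n \<Rightarrow> 'a) \<Rightarrow> real) \<Rightarrow> 'n \<Rightarrow> real^'a \<Rightarrow> bool" where
  "dominated A u k p = (\<exists>p'\<in>mixed_strats (A k). dominated_within A u A k p p')"

primrec surviving ::
  "('n::finite \<Rightarrow> 'a::finite set) \<Rightarrow> ('n \<Rightarrow> ('n \<Rightarrow> 'a) \<Rightarrow> real) \<Rightarrow> nat \<Rightarrow> 'n \<Rightarrow> 'a set" where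
  "surviving A u 0 k = A k"
| "surviving A u (Suc r) k = {\<alpha> \<in> surviving A u r k.
      \<not> (\<exists>p'\<in>mixed_strats (surviving A u r k).
            dominated_within A u (surviving A u r) k (pure_strat \<alpha>) p')}"

definition iter_dominated ::
  "('n::finite \<Rightarrow> 'a::finite set) \<Rightarrow> ('n \<Rightarrow> ('n \<Rightarrow> 'a) \<Rightarrow> real) \<Rightarrow> 'n \<Rightarrow> real^'a \<Rightarrow> bool" where
  "iter_dominated A u k p = (\<exists>r. p \<in> mixed_strats (surviving A u r k) \<and>
      (\<exists>p'\<in>mixed_strats (surviving A u r k). dominated_within A u (surviving A u r) k p p'))"

definition supp :: "real^'a::finite \<Rightarrow> 'a set" where
  "supp p = {\<alpha>. p $ \<alpha> \<noteq> 0}"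

end

theory Submission
  imports Defs
begin



lemma ms_nonneg: "x \<in> mixed_strats B \<Longrightarrow> 0 \<le> x $ a"
  by (simp add: mixed_strats_def)
lemma ms_zero: "x \<in> mixed_strats B \<Longrightarrow> a \<notin> B \<Longrightarrow> x $ a = 0"
  by (simp add: mixed_strats_def)
lemma ms_sum: "x \<in> mixed_strats B \<Longrightarrow> (\<Sum>a\<in>UNIV. x $ a) = 1"
  by (simp add: mixed_strats_def)
lemma ms_le1: "x \<in> mixed_strats B \<Longrightarrow> x $ a \<le> 1"
proof -
  assume x: "x \<in> mixed_strats B"
  have "x $ a \<le> (\<Sum>a\<in>UNIV. x $ a)"
    by (rule member_le_sum) (auto simp: ms_nonneg[OF x])
  thus ?thesis using ms_sum[OF x] by simp
qed

lemma ms_mono: "B \<subseteq> C \<Longrightarrow> mixed_strats B \<subseteq> mixed_strats C"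
  unfolding mixed_strats_def by auto

lemma pure_ms: "a \<in> B \<Longrightarrow> pure_strat a \<in> mixed_strats B"
  unfolding mixed_strats_def pure_strat_def by auto

lemma ms_compact: "compact (mixed_strats B)"
proof -
  have cl: "closed (mixed_strats B)"
  proof -
    have "mixed_strats B = (\<Inter>a. {x. 0 \<le> x $ a}) \<inter> (\<Inter>a\<in>-B. {x. x $ a = 0}) \<inter> {x. (\<Sum>a\<in>UNIV. x $ a) = 1}"
      unfolding mixed_strats_def by auto
    moreover have "closed {x::real^'a. (\<Sum>a\<in>UNIV. x $ a) = 1}"
      by (intro closed_Collect_eq continuous_intros)
    moreover have "\<And>a. closed {x::real^'a. 0 \<le> x $ a}"
      by (intro closed_Collect_le continuous_intros)
    moreover have "\<And>a. closed {x::real^'a. x $ a = 0}"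
      by (intro closed_Collect_eq continuous_intros)
    ultimately show ?thesis by (metis (no_types, lifting) closed_INT closed_Int)
  qed
  have "mixed_strats B \<subseteq> cbox 0 1"
    by (auto simp: mem_box_cart ms_nonneg ms_le1)
  hence "bounded (mixed_strats B)" using bounded_cbox bounded_subset by blast
  with cl show ?thesis using compact_eq_bounded_closed by blast
qed

lemma ms_convex: "x1 \<in> mixed_strats B \<Longrightarrow> x2 \<in> mixed_strats B \<Longrightarrow> 0 \<le> t \<Longrightarrow> t \<le> 1 \<Longrightarrow>
   t *\<^sub>R x1 + (1 - t) *\<^sub>R x2 \<in> mixed_strats B"
  unfolding mixed_strats_def by (auto simp: sum.distrib sum_distrib_left[symmetric])

lemma choice_map_props:
  assumes ne: "A l \<noteq> {}" and pen: "penalty_function (A l) (h l)"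
  shows "choice_map A h l y \<in> mixed_strats (A l) \<and>
     (\<forall>z\<in>mixed_strats (A l). inner y z - h l z \<le> inner y (choice_map A h l y) - h l (choice_map A h l y))"
proof -
  let ?S = "mixed_strats (A l)"
  let ?f = "\<lambda>z. inner y z - h l z"
  from pen have cont: "continuous_on ?S (h l)" and
    sc: "\<exists>K>0. \<forall>x1\<in>?S. \<forall>x2\<in>?S. \<forall>t\<in>{0..1}.
          h l (t *\<^sub>R x1 + (1 - t) *\<^sub>R x2) \<le> t * h l x1 + (1 - t) * h l x2
             - 1/2 * K * t * (1 - t) * (norm (x1 - x2))\<^sup>2"
    unfolding penalty_function_def by auto
  obtain K where K: "K > 0" and sc: "\<forall>x1\<in>?S. \<forall>x2\<in>?S. \<forall>t\<in>{0..1}.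
          h l (t *\<^sub>R x1 + (1 - t) *\<^sub>R x2) \<le> t * h l x1 + (1 - t) * h l x2
             - 1/2 * K * t * (1 - t) * (norm (x1 - x2))\<^sup>2" using sc by blast
  from ne obtain a where a: "a \<in> A l" by blast
  have "continuous_on ?S ?f" by (intro continuous_intros cont)
  then obtain x where x: "x \<in> ?S" "\<forall>z\<in>?S. ?f z \<le> ?f x"
    using continuous_attains_sup[OF ms_compact, of "A l" ?f] pure_ms[OF a] by blast
  have uniq: "x' = x" if x': "x' \<in> ?S" "\<forall>z\<in>?S. ?f z \<le> ?f x'" for x'
  proof (rule ccontr)
    assume ne: "x' \<noteq> x"
    let ?m = "(1/2) *\<^sub>R x' + (1 - 1/2) *\<^sub>R x"
    have m: "?m \<in> ?S" using ms_convex[OF x'(1) x(1), of "1/2"] by simp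
    have eq: "?f x' = ?f x" using x x' by (meson order_antisym)
    have hm: "h l ?m \<le> 1/2 * h l x' + 1/2 * h l x - 1/8 * K * (norm (x' - x))\<^sup>2"
    proof -
      have "h l ?m \<le> 1/2 * h l x' + (1 - 1/2) * h l x - 1/2 * K * (1/2) * (1 - 1/2) * (norm (x' - x))\<^sup>2"
        using sc[rule_format, OF x'(1) x(1), of "1/2"] by simp
      thus ?thesis by simp
    qed
    have "norm (x' - x) > 0" using ne by simp
    hence pos: "1/8 * K * (norm (x' - x))\<^sup>2 > 0" using K by simp
    have "inner y ?m = 1/2 * inner y x' + 1/2 * inner y x" by (simp add: inner_add_right)
    hence "?f ?m > ?f x" using hm eq pos by linarith
    thus False using x(2) m by fastforce
  qed
  have "\<exists>!x. x \<in> ?S \<and> (\<forall>z\<in>?S. ?f z \<le> ?f x)"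
    using x uniq by blast
  hence "choice_map A h l y \<in> ?S \<and> (\<forall>z\<in>?S. ?f z \<le> ?f (choice_map A h l y))"
    unfolding choice_map_def by (rule theI')
  thus ?thesis by simp
qed




definition Pk :: "('n::finite \<Rightarrow> real^'a::finite) \<Rightarrow> 'n \<Rightarrow> ('n \<Rightarrow> 'a) \<Rightarrow> real" where
  "Pk z k s = (\<Prod>l\<in>UNIV-{k}. z l $ s l)"

lemma exp_payoff_upd:
  "exp_payoff A u k (z(k:=w)) = (\<Sum>s\<in>PiE UNIV A. w $ s k * Pk z k s * u k s)"
proof -
  have "(\<Prod>l\<in>UNIV. (z(k:=w)) l $ s l) = w $ s k * Pk z k s" for s
  proof -
    have "(\<Prod>l\<in>UNIV. (z(k:=w)) l $ s l) = (z(k:=w)) k $ s k * (\<Prod>l\<in>UNIV-{k}. (z(k:=w)) l $ s l)"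
      by (rule prod.remove) auto
    also have "(\<Prod>l\<in>UNIV-{k}. (z(k:=w)) l $ s l) = Pk z k s"
      unfolding Pk_def by (rule prod.cong) auto
    finally show ?thesis by simp
  qed
  thus ?thesis unfolding exp_payoff_def by simp
qed

lemma Pk_upd: "Pk (z(k:=w)) k s = Pk z k s"
  unfolding Pk_def by (rule prod.cong) auto

lemma Pk_upd2: "Pk z k (s(k:=a)) = Pk z k s"
  unfolding Pk_def by (rule prod.cong) auto

lemma exp_payoff_lin:
  "exp_payoff A u k (z(k:=w)) = (\<Sum>a\<in>A k. w$a * exp_payoff A u k (z(k:=pure_strat a)))"
proof -
  have "(\<Sum>a\<in>A k. w$a * exp_payoff A u k (z(k:=pure_strat a)))
      = (\<Sum>a\<in>A k. \<Sum>s\<in>PiE UNIV A. w$a * (pure_strat a $ s k * Pk z k s * u k s))"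
    unfolding exp_payoff_upd by (simp only: sum_distrib_left mult.assoc)
  also have "\<dots> = (\<Sum>s\<in>PiE UNIV A. \<Sum>a\<in>A k. w$a * (pure_strat a $ s k * Pk z k s * u k s))"
    by (rule sum.swap)
  also have "\<dots> = (\<Sum>s\<in>PiE UNIV A. w $ s k * Pk z k s * u k s)"
  proof (rule sum.cong)
    fix s assume s: "s \<in> PiE UNIV A"
    hence sk: "s k \<in> A k" by (auto simp: PiE_iff)
    have "(\<Sum>a\<in>A k. w$a * (pure_strat a $ s k * Pk z k s * u k s))
        = (\<Sum>a\<in>A k. if s k = a then w $ s k * Pk z k s * u k s else 0)"
      by (rule sum.cong) (auto simp: pure_strat_def)
    also have "\<dots> = w $ s k * Pk z k s * u k s" using sk by (simp add: sum.delta)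
    finally show "(\<Sum>a\<in>A k. w$a * (pure_strat a $ s k * Pk z k s * u k s)) = w $ s k * Pk z k s * u k s" .
  qed simp
  also have "\<dots> = exp_payoff A u k (z(k:=w))" by (rule exp_payoff_upd[symmetric])
  finally show ?thesis by (rule sym)
qed

lemma inner_payoff_vec:
  "inner (payoff_vec A u k z) q = exp_payoff A u k (z(k:=q))"
proof -
  have "inner (payoff_vec A u k z) q = (\<Sum>a\<in>UNIV. (payoff_vec A u k z) $ a * q $ a)"
    by (simp add: inner_vec_def)
  also have "\<dots> = (\<Sum>a\<in>A k. (payoff_vec A u k z) $ a * q $ a)"
    by (rule sum.mono_neutral_right) (simp_all add: payoff_vec_def)
  also have "\<dots> = (\<Sum>a\<in>A k. q$a * exp_payoff A u k (z(k:=pure_strat a)))"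
    by (rule sum.cong) (simp_all add: payoff_vec_def)
  also have "\<dots> = exp_payoff A u k (z(k:=q))" by (rule exp_payoff_lin[symmetric])
  finally show ?thesis .
qed

lemma exp_payoff_diff:
  "exp_payoff A u k (z(k:=p')) - exp_payoff A u k (z(k:=p)) = exp_payoff A u k (z(k:=p'-p))"
  unfolding exp_payoff_upd sum_subtractf[symmetric]
  by (rule sum.cong) (simp_all add: left_diff_distrib)




lemma prod_upd: "(\<Prod>l\<in>UNIV. (z(k:=w)) l $ s l) = w $ s k * Pk z k s"
proof -
  have "(\<Prod>l\<in>UNIV. (z(k:=w)) l $ s l) = (z(k:=w)) k $ s k * (\<Prod>l\<in>UNIV-{k}. (z(k:=w)) l $ s l)"
    by (rule prod.remove) auto
  also have "(\<Prod>l\<in>UNIV-{k}. (z(k:=w)) l $ s l) = Pk z k s"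
    unfolding Pk_def by (rule prod.cong) auto
  finally show ?thesis by simp
qed

context
  fixes A :: "'n::finite \<Rightarrow> 'a::finite set" and S :: "'n \<Rightarrow> 'a set"
    and u :: "'n \<Rightarrow> ('n \<Rightarrow> 'a) \<Rightarrow> real" and k :: 'n and d :: "real^'a" and a0 :: 'a
  assumes SA: "\<And>l. S l \<subseteq> A l" and a0: "a0 \<in> S k"
begin

definition "TT = {s\<in>PiE UNIV A. \<forall>l. l \<noteq> k \<longrightarrow> s l \<in> S l}"
definition "T0 = PiE UNIV (S(k:={a0}))"
definition "cc \<tau> = (\<Sum>a\<in>A k. d$a * u k (\<tau>(k:=a)))"
definition "bad z = (\<Sum>s\<in>PiE UNIV A - TT. d $ s k * Pk z k s * u k s)"

lemma T0_iff: "\<tau> \<in> T0 \<longleftrightarrow> \<tau> k = a0 \<and> (\<forall>l. l \<noteq> k \<longrightarrow> \<tau> l \<in> S l)"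
  unfolding T0_def by (simp add: PiE_iff) (metis fun_upd_other fun_upd_same singleton_iff)

lemma TT_iff: "s \<in> TT \<longleftrightarrow> s \<in> PiE UNIV A \<and> (\<forall>l. l \<noteq> k \<longrightarrow> s l \<in> S l)"
  unfolding TT_def by simp

lemma T0_TT: "\<tau> \<in> T0 \<Longrightarrow> a \<in> A k \<Longrightarrow> \<tau>(k:=a) \<in> TT"
  unfolding T0_iff TT_iff using SA by (auto simp: PiE_iff)

lemma split_F:
  "exp_payoff A u k (z(k:=d)) = (\<Sum>\<tau>\<in>T0. Pk z k \<tau> * cc \<tau>) + bad z"
proof -
  let ?g = "\<lambda>s. d $ s k * Pk z k s * u k s"
  have fin: "finite (PiE UNIV A)" by (simp add: finite_PiE)
  have sub: "TT \<subseteq> PiE UNIV A" unfolding TT_def by auto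
  have "exp_payoff A u k (z(k:=d)) = sum ?g (PiE UNIV A)" by (rule exp_payoff_upd)
  also have "\<dots> = sum ?g (PiE UNIV A - TT) + sum ?g TT"
    by (rule sum.subset_diff[OF sub fin])
  also have "sum ?g TT = (\<Sum>\<tau>\<in>T0. Pk z k \<tau> * cc \<tau>)"
  proof -
    have bij: "bij_betw (\<lambda>(\<tau>,a). \<tau>(k:=a)) (T0 \<times> A k) TT"
    proof (rule bij_betwI[where g = "\<lambda>s. (s(k:=a0), s k)"])
      show "(\<lambda>(\<tau>, a). \<tau>(k := a)) \<in> T0 \<times> A k \<rightarrow> TT" using T0_TT by auto
      show "(\<lambda>s. (s(k := a0), s k)) \<in> TT \<rightarrow> T0 \<times> A k"
        using a0 by (auto simp: TT_iff T0_iff PiE_iff)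
      show "(\<lambda>s. (s(k:=a0), s k)) ((\<lambda>(\<tau>,a). \<tau>(k:=a)) x) = x"
        if "x \<in> T0 \<times> A k" for x
        using that by (auto simp: fun_eq_iff T0_iff)
      show "(\<lambda>(\<tau>,a). \<tau>(k:=a)) ((\<lambda>s. (s(k:=a0), s k)) y) = y" if "y \<in> TT" for y
        by auto
    qed
    have "sum ?g TT = sum (\<lambda>(\<tau>,a). ?g (\<tau>(k:=a))) (T0 \<times> A k)"
      using sum.reindex_bij_betw[OF bij, of ?g] by (simp add: case_prod_beta)
    also have "\<dots> = (\<Sum>\<tau>\<in>T0. \<Sum>a\<in>A k. ?g (\<tau>(k:=a)))"
      by (rule sum.cartesian_product[symmetric])
    also have "\<dots> = (\<Sum>\<tau>\<in>T0. Pk z k \<tau> * cc \<tau>)"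
      unfolding cc_def by (rule sum.cong) (simp_all add: Pk_upd2 sum_distrib_left mult_ac)
    finally show ?thesis .
  qed
  finally show ?thesis unfolding bad_def by (simp only: add.commute)
qed

lemma Pk_pure:
  "Pk (\<lambda>l. pure_strat (\<tau> l)) k s = (if \<forall>l. l \<noteq> k \<longrightarrow> s l = \<tau> l then 1 else 0)"
proof (cases "\<forall>l. l \<noteq> k \<longrightarrow> s l = \<tau> l")
  case True
  have "Pk (\<lambda>l. pure_strat (\<tau> l)) k s = 1"
    unfolding Pk_def using True by (intro prod.neutral) (simp add: pure_strat_def)
  thus ?thesis using True by simp
next
  case False
  then obtain l where "l \<noteq> k" "s l \<noteq> \<tau> l" by blast
  hence "\<exists>l\<in>UNIV-{k}. pure_strat (\<tau> l) $ s l = 0" by (auto simp: pure_strat_def)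
  hence "Pk (\<lambda>l. pure_strat (\<tau> l)) k s = 0" unfolding Pk_def
    by (metis finite prod_zero_iff)
  thus ?thesis using False by simp
qed

lemma vertex_val:
  assumes \<tau>: "\<tau> \<in> T0"
  shows "exp_payoff A u k ((\<lambda>l. pure_strat (\<tau> l))(k:=d)) = cc \<tau>"
proof -
  have bad0: "bad (\<lambda>l. pure_strat (\<tau> l)) = 0"
    unfolding bad_def
  proof (rule sum.neutral, rule ballI)
    fix s assume s: "s \<in> PiE UNIV A - TT"
    then obtain l where l: "l \<noteq> k" "s l \<notin> S l" unfolding TT_def by auto
    have "\<tau> l \<in> S l" using \<tau> l unfolding T0_iff by auto
    hence "s l \<noteq> \<tau> l" using l by auto
    thus "d $ s k * Pk (\<lambda>l. pure_strat (\<tau> l)) k s * u k s = 0" using l by (auto simp: Pk_pure)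
  qed
  have "(\<Sum>\<tau>'\<in>T0. Pk (\<lambda>l. pure_strat (\<tau> l)) k \<tau>' * cc \<tau>') = (\<Sum>\<tau>'\<in>T0. if \<tau>' = \<tau> then cc \<tau>' else 0)"
  proof (rule sum.cong)
    fix \<tau>' assume \<tau>': "\<tau>' \<in> T0"
    have "(\<forall>l. l \<noteq> k \<longrightarrow> \<tau>' l = \<tau> l) \<longleftrightarrow> \<tau>' = \<tau>"
      using \<tau> \<tau>' unfolding T0_iff fun_eq_iff by metis
    thus "Pk (\<lambda>l. pure_strat (\<tau> l)) k \<tau>' * cc \<tau>' = (if \<tau>' = \<tau> then cc \<tau>' else 0)"
      by (simp add: Pk_pure)
  qed simp
  also have "\<dots> = cc \<tau>" using \<tau> by (simp add: sum.delta' T0_def finite_PiE)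
  finally show ?thesis using split_F bad0 by simp
qed

lemma sum_Pk_T0:
  "(\<Sum>\<tau>\<in>T0. Pk z k \<tau>) = (\<Prod>l\<in>UNIV-{k}. \<Sum>a\<in>S l. z l $ a)"
proof -
  let ?z = "z(k:=pure_strat a0)"
  have "(\<Prod>l\<in>UNIV. \<Sum>a\<in>(S(k:={a0})) l. ?z l $ a) = (\<Sum>g\<in>T0. \<Prod>l\<in>UNIV. ?z l $ g l)"
    unfolding T0_def by (rule prod_sum_PiE) auto
  also have "\<dots> = (\<Sum>\<tau>\<in>T0. Pk z k \<tau>)"
  proof (rule sum.cong)
    fix g assume "g \<in> T0"
    hence "g k = a0" by (simp add: T0_iff)
    thus "(\<Prod>l\<in>UNIV. ?z l $ g l) = Pk z k g"
      using prod_upd[of z k "pure_strat a0" g] by (simp add: pure_strat_def)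
  qed simp
  also have "(\<Prod>l\<in>UNIV. \<Sum>a\<in>(S(k:={a0})) l. ?z l $ a)
     = (\<Sum>a\<in>(S(k:={a0})) k. ?z k $ a) * (\<Prod>l\<in>UNIV-{k}. \<Sum>a\<in>(S(k:={a0})) l. ?z l $ a)"
    by (rule prod.remove) auto
  also have "(\<Prod>l\<in>UNIV-{k}. \<Sum>a\<in>(S(k:={a0})) l. ?z l $ a) = (\<Prod>l\<in>UNIV-{k}. \<Sum>a\<in>S l. z l $ a)"
    by (rule prod.cong) auto
  finally show ?thesis by (simp add: pure_strat_def)
qed

lemma lower_bound:
  assumes nn: "\<And>l a. 0 \<le> z l $ a" and c0: "\<And>\<tau>. \<tau> \<in> T0 \<Longrightarrow> c0 \<le> cc \<tau>"
  shows "c0 * (\<Prod>l\<in>UNIV-{k}. \<Sum>a\<in>S l. z l $ a) + bad z \<le> exp_payoff A u k (z(k:=d))"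
proof -
  have "c0 * (\<Prod>l\<in>UNIV-{k}. \<Sum>a\<in>S l. z l $ a) = (\<Sum>\<tau>\<in>T0. Pk z k \<tau> * c0)"
    by (simp add: sum_Pk_T0[symmetric] sum_distrib_left mult_ac)
  also have "\<dots> \<le> (\<Sum>\<tau>\<in>T0. Pk z k \<tau> * cc \<tau>)"
    by (rule sum_mono, rule mult_left_mono) (auto simp: c0 Pk_def nn prod_nonneg)
  finally show ?thesis using split_F by simp
qed

end



lemma div_of_deriv:
  fixes f f' :: "real \<Rightarrow> real"
  assumes der: "\<And>t. t > 0 \<Longrightarrow> (f has_real_derivative f' t) (at t)"
    and T: "T > 0" and del: "\<delta> > 0" and bnd: "\<And>t. t \<ge> T \<Longrightarrow> \<delta> \<le> f' t"
  shows "filterlim f at_top at_top"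
proof -
  have lin: "f T + \<delta> * (t - T) \<le> f t" if t: "t \<ge> T" for t
  proof -
    have "(\<lambda>s. f s - \<delta> * s) T \<le> (\<lambda>s. f s - \<delta> * s) t"
    proof (rule DERIV_nonneg_imp_nondecreasing[OF t])
      fix x assume x: "T \<le> x" "x \<le> t"
      have "((\<lambda>s. f s - \<delta> * s) has_real_derivative f' x - \<delta> * 1) (at x)"
        using x T by (intro derivative_intros der) auto
      thus "\<exists>y. ((\<lambda>s. f s - \<delta> * s) has_real_derivative y) (at x) \<and> 0 \<le> y"
        using bnd[of x] x by force
    qed
    thus ?thesis by (simp add: algebra_simps)
  qed
  show ?thesis unfolding filterlim_at_top
  proof
    fix Z
    show "eventually (\<lambda>t. Z \<le> f t) at_top"
      unfolding eventually_at_top_linorder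
    proof (intro exI allI impI)
      fix t assume t: "max T (T + (Z - f T) / \<delta>) \<le> t"
      hence "Z - f T \<le> \<delta> * (t - T)" using del by (simp add: field_simps)
      thus "Z \<le> f t" using lin[of t] t by linarith
    qed
  qed
qed

locale gd =
  fixes A :: "'n::finite \<Rightarrow> 'a::finite set" and u :: "'n \<Rightarrow> ('n \<Rightarrow> 'a) \<Rightarrow> real"
    and h :: "'n \<Rightarrow> real^'a \<Rightarrow> real" and y :: "real \<Rightarrow> 'n \<Rightarrow> real^'a"
  assumes nonempty: "\<And>l. A l \<noteq> {}" and penalty: "\<And>l. penalty_function (A l) (h l)"
    and ode: "\<And>t l. t \<ge> 0 \<Longrightarrow>
       ((\<lambda>s. y s l) has_vector_derivative
          payoff_vec A u l (\<lambda>j. choice_map A h j (y t j))) (at t within {0..})"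
begin

definition "xs t = (\<lambda>j. choice_map A h j (y t j))"

lemma xs_ms: "xs t l \<in> mixed_strats (A l)"
  unfolding xs_def using choice_map_props[of A l h, OF nonempty penalty] by blast

lemma xs_opt: "z \<in> mixed_strats (A l) \<Longrightarrow> inner (y t l) z - h l z \<le> inner (y t l) (xs t l) - h l (xs t l)"
  unfolding xs_def using choice_map_props[of A l h, OF nonempty penalty] by blast

lemma h_bound: "\<exists>M. \<forall>z\<in>mixed_strats (A l). \<bar>h l z\<bar> \<le> M"
proof -
  have cont: "continuous_on (mixed_strats (A l)) (h l)"
    using penalty[of l] unfolding penalty_function_def by blast
  have "compact (h l ` mixed_strats (A l))"
    by (rule compact_continuous_image[OF cont ms_compact])
  hence "bounded (h l ` mixed_strats (A l))" by (rule compact_imp_bounded)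
  then obtain M where "\<forall>x\<in>h l ` mixed_strats (A l). norm x \<le> M" unfolding bounded_iff by blast
  thus ?thesis by auto
qed

lemma key_ineq:
  assumes p: "p \<in> mixed_strats (A k)" and p': "p' \<in> mixed_strats (A k)"
    and e: "\<epsilon> > 0" and lb: "\<And>a. a \<in> supp p \<Longrightarrow> \<epsilon> \<le> xs t k $ a"
    and M: "\<And>z. z \<in> mixed_strats (A k) \<Longrightarrow> \<bar>h k z\<bar> \<le> M"
  shows "\<epsilon> * inner (y t k) (p' - p) \<le> 2 * M"
proof -
  let ?x = "xs t k"
  let ?z = "?x + \<epsilon> *\<^sub>R (p' - p)"
  have x: "?x \<in> mixed_strats (A k)" by (rule xs_ms)
  have zc: "\<And>a. ?z $ a = ?x $ a + \<epsilon> * p' $ a - \<epsilon> * p $ a"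
    by (simp add: right_diff_distrib)
  have z: "?z \<in> mixed_strats (A k)"
    unfolding mixed_strats_def
  proof (intro CollectI conjI allI impI)
    fix a
    show "0 \<le> ?z $ a"
    proof (cases "p $ a = 0")
      case True thus ?thesis using ms_nonneg[OF x, of a] ms_nonneg[OF p', of a] e by simp
    next
      case False
      hence "\<epsilon> \<le> ?x $ a" using lb supp_def by auto
      moreover have "\<epsilon> * p $ a \<le> \<epsilon>" using ms_le1[OF p, of a] e by simp
      moreover have "0 \<le> \<epsilon> * p' $ a" using ms_nonneg[OF p', of a] e by simp
      ultimately show ?thesis unfolding zc by linarith
    qed
  next
    fix a assume "a \<notin> A k"
    thus "?z $ a = 0" using ms_zero[OF x] ms_zero[OF p] ms_zero[OF p'] by simp
  next
    have "(\<Sum>a\<in>UNIV. ?z $ a) = (\<Sum>a\<in>UNIV. ?x $ a) + \<epsilon> * (\<Sum>a\<in>UNIV. p' $ a) - \<epsilon> * (\<Sum>a\<in>UNIV. p $ a)"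
      unfolding zc sum_subtractf sum.distrib sum_distrib_left by simp
    thus "(\<Sum>a\<in>UNIV. ?z $ a) = 1"
      using ms_sum[OF x] ms_sum[OF p] ms_sum[OF p'] by simp
  qed
  have "inner (y t k) ?z - h k ?z \<le> inner (y t k) ?x - h k ?x" by (rule xs_opt[OF z])
  moreover have "inner (y t k) ?z = inner (y t k) ?x + \<epsilon> * inner (y t k) (p' - p)"
    by (simp add: inner_add_right)
  moreover have "\<bar>h k ?z\<bar> \<le> M" "\<bar>h k ?x\<bar> \<le> M" using M z x by auto
  ultimately show ?thesis by linarith
qed

lemma supp_ne: "p \<in> mixed_strats B \<Longrightarrow> supp p \<noteq> {}"
proof
  assume p: "p \<in> mixed_strats B" and e: "supp p = {}"
  hence "\<And>a. p $ a = 0" unfolding supp_def by auto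
  thus False using ms_sum[OF p] by simp
qed

lemma extinct_of_div:
  assumes p: "p \<in> mixed_strats (A k)" and p': "p' \<in> mixed_strats (A k)"
    and div: "filterlim (\<lambda>t. inner (y t k) (p' - p)) at_top at_top"
  shows "((\<lambda>t. Min ((\<lambda>a. xs t k $ a) ` supp p)) \<longlongrightarrow> 0) at_top"
proof -
  have fin: "finite (supp p)" by simp
  have ne: "supp p \<noteq> {}" by (rule supp_ne[OF p])
  obtain M where M: "\<And>z. z \<in> mixed_strats (A k) \<Longrightarrow> \<bar>h k z\<bar> \<le> M" using h_bound by blast
  show ?thesis
  proof (rule order_tendstoI)
    fix a :: real assume a: "a < 0"
    show "eventually (\<lambda>t. a < Min ((\<lambda>a. xs t k $ a) ` supp p)) at_top"
    proof (rule always_eventually, rule allI)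
      fix t
      have "0 \<le> Min ((\<lambda>a. xs t k $ a) ` supp p)"
        using fin ne ms_nonneg[OF xs_ms] by (simp add: Min_ge_iff)
      thus "a < Min ((\<lambda>a. xs t k $ a) ` supp p)" using a by linarith
    qed
  next
    fix a :: real assume a: "0 < a"
    have "eventually (\<lambda>t. 2 * M / a + 1 \<le> inner (y t k) (p' - p)) at_top"
      using div unfolding filterlim_at_top by blast
    thus "eventually (\<lambda>t. Min ((\<lambda>a. xs t k $ a) ` supp p) < a) at_top"
    proof (rule eventually_mono)
      fix t assume t: "2 * M / a + 1 \<le> inner (y t k) (p' - p)"
      show "Min ((\<lambda>a. xs t k $ a) ` supp p) < a"
      proof (rule ccontr)
        assume "\<not> ?thesis"
        hence "a \<le> Min ((\<lambda>a. xs t k $ a) ` supp p)" by simp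
        hence "\<And>b. b \<in> supp p \<Longrightarrow> a \<le> xs t k $ b" using fin ne by (simp add: Min_ge_iff)
        hence "a * inner (y t k) (p' - p) \<le> 2 * M" using key_ineq[OF p p' a] M by blast
        moreover have "a * (2 * M / a + 1) \<le> a * inner (y t k) (p' - p)"
          using t a by (simp add: mult_left_mono)
        moreover have "a * (2 * M / a + 1) = 2 * M + a" using a by (simp add: field_simps)
        ultimately show False using a by linarith
      qed
    qed
  qed
qed

lemma deriv_D:
  assumes t: "t > 0"
  shows "((\<lambda>s. inner (y s k) d) has_real_derivative exp_payoff A u k ((xs t)(k:=d))) (at t)"
proof -
  have "t \<in> interior {0..}"
    using interior_maximal[of "{0<..}" "{0::real..}"] t by auto
  hence "((\<lambda>s. y s k) has_vector_derivative payoff_vec A u k (xs t)) (at t)"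
    using ode[of t k] t at_within_interior unfolding xs_def by fastforce
  hence "((\<lambda>s. y s k) has_derivative (\<lambda>x. x *\<^sub>R payoff_vec A u k (xs t))) (at t)"
    by (simp add: has_vector_derivative_def)
  from has_derivative_inner_left[OF this, of d]
  have "((\<lambda>s. inner (y s k) d) has_derivative (\<lambda>x. inner (payoff_vec A u k (xs t)) d * x)) (at t)"
    by (simp add: mult.commute)
  thus ?thesis by (simp add: has_field_derivative_def inner_payoff_vec)
qed

end



lemma Pk_le:
  assumes nn: "\<And>l a. 0 \<le> z l $ a" and le1: "\<And>l a. z l $ a \<le> 1" and l: "l \<noteq> k"
  shows "Pk z k s \<le> z l $ s l"
proof -
  have "Pk z k s = z l $ s l * (\<Prod>j\<in>UNIV-{k}-{l}. z j $ s j)"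
    unfolding Pk_def using l by (intro prod.remove) auto
  moreover have "(\<Prod>j\<in>UNIV-{k}-{l}. z j $ s j) \<le> 1"
    by (rule prod_le_1) (auto simp: nn le1)
  ultimately show ?thesis using nn[of l "s l"] by (simp add: mult_left_le)
qed

lemma supp_pure: "supp (pure_strat a) = {a}"
  unfolding supp_def pure_strat_def by auto

lemma surv_sub: "surviving A u r l \<subseteq> A l"
  by (induction r) auto

context gd begin

lemma S_ne:
  assumes ext: "\<And>a. a \<notin> S \<Longrightarrow> ((\<lambda>t. xs t l $ a) \<longlongrightarrow> 0) at_top"
  shows "S \<noteq> {}"
proof
  assume e: "S = {}"
  have L: "((\<lambda>t. \<Sum>a\<in>UNIV. xs t l $ a) \<longlongrightarrow> 0) at_top"
    by (rule tendsto_null_sum) (use ext e in auto)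
  have eq: "(\<lambda>t. \<Sum>a\<in>UNIV. xs t l $ a) = (\<lambda>t::real. 1::real)" using ms_sum[OF xs_ms] by blast
  from L have "((\<lambda>t::real. 1::real) \<longlongrightarrow> 0) at_top" by (simp only: eq)
  moreover have "(at_top::real filter) \<noteq> bot" using trivial_limit_at_top_linorder by simp
  ultimately have "(1::real) = 0" using tendsto_unique[OF _ tendsto_const] by blast
  thus False by simp
qed

lemma core:
  assumes SA: "\<And>l. S l \<subseteq> A l"
    and ext: "\<And>l a. a \<notin> S l \<Longrightarrow> ((\<lambda>t. xs t l $ a) \<longlongrightarrow> 0) at_top"
    and p: "p \<in> mixed_strats (A k)" and p': "p' \<in> mixed_strats (A k)"
    and dw: "dominated_within A u S k p p'"
  shows "((\<lambda>t. Min ((\<lambda>a. xs t k $ a) ` supp p)) \<longlongrightarrow> 0) at_top"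
proof -
  define d where "d = p' - p"
  have Sne: "\<And>l. S l \<noteq> {}" using S_ne ext by blast
  obtain a0 where a0: "a0 \<in> S k" using Sne by blast
  let ?T0 = "T0 S k a0"
  let ?cc = "cc A u k d"
  have finT0: "finite ?T0" unfolding T0_def by (simp add: finite_PiE)
  have "(\<lambda>l. if l = k then a0 else (SOME a. a \<in> S l)) \<in> ?T0"
  proof -
    have "\<And>l. (SOME a. a \<in> S l) \<in> S l" by (simp add: some_in_eq Sne)
    thus ?thesis unfolding T0_iff[where S=S and A=A, OF SA a0] by simp
  qed
  hence neT0: "?T0 \<noteq> {}" by blast
  have ccpos: "?cc \<tau> > 0" if \<tau>: "\<tau> \<in> ?T0" for \<tau>
  proof -
    let ?z = "\<lambda>l. pure_strat (\<tau> l)"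
    have "\<forall>l. l \<noteq> k \<longrightarrow> ?z l \<in> mixed_strats (S l)"
      using \<tau> T0_iff[where S=S and A=A, OF SA a0] pure_ms by blast
    hence "exp_payoff A u k (?z(k := p)) < exp_payoff A u k (?z(k := p'))"
      by (rule mp[OF dw[unfolded dominated_within_def, THEN spec[of _ ?z]]])
    hence "exp_payoff A u k (?z(k := d)) > 0" using exp_payoff_diff[of A u k ?z p' p]
      unfolding d_def by linarith
    thus ?thesis using vertex_val[where S=S and A=A and u=u and d=d, OF SA a0 \<tau>] by simp
  qed
  define c0 where "c0 = Min (?cc ` ?T0)"
  have c0pos: "c0 > 0" unfolding c0_def using finT0 neT0 ccpos by simp
  have c0le: "\<And>\<tau>. \<tau> \<in> ?T0 \<Longrightarrow> c0 \<le> ?cc \<tau>" unfolding c0_def using finT0 by simp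
  define m where "m l t = (\<Sum>a\<in>S l. xs t l $ a)" for l t
  have m_lim: "((\<lambda>t. m l t) \<longlongrightarrow> 1) at_top" for l
  proof -
    have "m l t = 1 - (\<Sum>a\<in>UNIV - S l. xs t l $ a)" for t
      using sum.subset_diff[of "S l" UNIV "\<lambda>a. xs t l $ a"] ms_sum[OF xs_ms, of t l]
      unfolding m_def by simp
    moreover have "((\<lambda>t. 1 - (\<Sum>a\<in>UNIV - S l. xs t l $ a)) \<longlongrightarrow> 1 - 0) at_top"
      by (intro tendsto_diff tendsto_const tendsto_null_sum ext) auto
    ultimately show ?thesis by simp
  qed
  have prod_lim: "((\<lambda>t. \<Prod>l\<in>UNIV-{k}. m l t) \<longlongrightarrow> (\<Prod>l\<in>UNIV-{k}. (1::real))) at_top"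
    by (intro tendsto_prod m_lim)
  have bad_lim: "((\<lambda>t. bad A S u k d (xs t)) \<longlongrightarrow> 0) at_top"
    unfolding bad_def[where S=S and A=A, OF SA a0]
  proof (rule tendsto_null_sum)
    fix s assume s: "s \<in> PiE UNIV A - TT A S k"
    then obtain l where l: "l \<noteq> k" "s l \<notin> S l" using TT_iff[where S=S and A=A, OF SA a0] by blast
    have "((\<lambda>t. Pk (xs t) k s) \<longlongrightarrow> 0) at_top"
    proof (rule tendsto_sandwich[of "\<lambda>t. 0" _ _ "\<lambda>t. xs t l $ s l"])
      show "eventually (\<lambda>t. 0 \<le> Pk (xs t) k s) at_top"
        by (intro always_eventually allI) (simp add: Pk_def prod_nonneg ms_nonneg[OF xs_ms])
      show "eventually (\<lambda>t. Pk (xs t) k s \<le> xs t l $ s l) at_top"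
        by (intro always_eventually allI Pk_le l ms_nonneg[OF xs_ms] ms_le1[OF xs_ms])
      show "((\<lambda>t. xs t l $ s l) \<longlongrightarrow> 0) at_top" by (rule ext[OF l(2)])
    qed simp
    hence "((\<lambda>t. d $ s k * Pk (xs t) k s * u k s) \<longlongrightarrow> d $ s k * 0 * u k s) at_top"
      by (intro tendsto_intros)
    thus "((\<lambda>t. d $ s k * Pk (xs t) k s * u k s) \<longlongrightarrow> 0) at_top" by simp
  qed
  have g_lim: "((\<lambda>t. c0 * (\<Prod>l\<in>UNIV-{k}. m l t) + bad A S u k d (xs t)) \<longlongrightarrow> c0 * 1 + 0) at_top"
    using prod_lim bad_lim by (intro tendsto_intros) auto
  have "eventually (\<lambda>t. c0 / 2 < c0 * (\<Prod>l\<in>UNIV-{k}. m l t) + bad A S u k d (xs t)) at_top"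
    by (rule order_tendstoD(1)[OF g_lim]) (use c0pos in simp)
  hence "eventually (\<lambda>t. c0 / 2 \<le> exp_payoff A u k ((xs t)(k:=d))) at_top"
  proof (rule eventually_mono)
    fix t assume "c0 / 2 < c0 * (\<Prod>l\<in>UNIV-{k}. m l t) + bad A S u k d (xs t)"
    moreover have "c0 * (\<Prod>l\<in>UNIV-{k}. m l t) + bad A S u k d (xs t) \<le> exp_payoff A u k ((xs t)(k:=d))"
      unfolding m_def by (rule lower_bound[where S=S and A=A, OF SA a0]) (auto simp: ms_nonneg[OF xs_ms] c0le)
    ultimately show "c0 / 2 \<le> exp_payoff A u k ((xs t)(k:=d))" by linarith
  qed
  then obtain T' where T': "\<And>t. t \<ge> T' \<Longrightarrow> c0 / 2 \<le> exp_payoff A u k ((xs t)(k:=d))"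
    unfolding eventually_at_top_linorder by blast
  have "filterlim (\<lambda>t. inner (y t k) d) at_top at_top"
  proof (rule div_of_deriv[where f' = "\<lambda>t. exp_payoff A u k ((xs t)(k:=d))"])
    show "\<And>t. 0 < t \<Longrightarrow> ((\<lambda>s. inner (y s k) d) has_real_derivative exp_payoff A u k ((xs t)(k:=d))) (at t)"
      by (rule deriv_D)
    show "0 < max T' 1" by simp
    show "0 < c0 / 2" using c0pos by simp
    show "\<And>t. max T' 1 \<le> t \<Longrightarrow> c0 / 2 \<le> exp_payoff A u k ((xs t)(k:=d))" using T' by simp
  qed
  thus ?thesis unfolding d_def by (rule extinct_of_div[OF p p'])
qed

lemma ext_all: "a \<notin> surviving A u r l \<Longrightarrow> ((\<lambda>t. xs t l $ a) \<longlongrightarrow> 0) at_top"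
proof (induction r arbitrary: l a)
  case 0
  hence "\<And>t. xs t l $ a = 0" using ms_zero[OF xs_ms] by simp
  thus ?case by simp
next
  case (Suc r)
  show ?case
  proof (cases "a \<in> surviving A u r l")
    case False thus ?thesis by (rule Suc.IH)
  next
    case True
    then obtain p' where p': "p' \<in> mixed_strats (surviving A u r l)"
      and dw: "dominated_within A u (surviving A u r) l (pure_strat a) p'"
      using Suc.prems by auto
    have "((\<lambda>t. Min ((\<lambda>b. xs t l $ b) ` supp (pure_strat a))) \<longlongrightarrow> 0) at_top"
    proof (rule core[OF surv_sub Suc.IH _ _ dw])
      show "pure_strat a \<in> mixed_strats (A l)" using True surv_sub by (intro pure_ms) blast
      show "p' \<in> mixed_strats (A l)" using p' ms_mono[OF surv_sub] by blast
    qed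
    thus ?thesis by (simp add: supp_pure)
  qed
qed

end

theorem theorem4p1:
  fixes A :: "'n::finite \<Rightarrow> 'a::finite set"
    and u :: "'n \<Rightarrow> ('n \<Rightarrow> 'a) \<Rightarrow> real"
    and h :: "'n \<Rightarrow> real^'a \<Rightarrow> real"
    and y :: "real \<Rightarrow> 'n \<Rightarrow> real^'a"
    and k :: 'n and p :: "real^'a"
  assumes nonempty: "\<And>l. A l \<noteq> {}"
    and penalty: "\<And>l. penalty_function (A l) (h l)"
    and ode: "\<And>t l. t \<ge> 0 \<Longrightarrow>
       ((\<lambda>s. y s l) has_vector_derivative
          payoff_vec A u l (\<lambda>j. choice_map A h j (y t j))) (at t within {0..})"
    and p_strat: "p \<in> mixed_strats (A k)"
    and dom: "dominated A u k p \<or> iter_dominated A u k p"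
  shows "((\<lambda>t. Min ((\<lambda>\<alpha>. choice_map A h k (y t k) $ \<alpha>) ` supp p)) \<longlongrightarrow> 0) at_top"
proof -
  interpret g: gd A u h y using nonempty penalty ode by unfold_locales
  have xsk: "\<And>t. choice_map A h k (y t k) = g.xs t k" by (simp add: g.xs_def)
  have ext0: "\<And>l a. a \<notin> A l \<Longrightarrow> ((\<lambda>t. g.xs t l $ a) \<longlongrightarrow> 0) at_top"
    using g.ext_all[where r=0] by simp
  from dom show ?thesis
  proof
    assume "dominated A u k p"
    then obtain p' where p': "p' \<in> mixed_strats (A k)" and dw: "dominated_within A u A k p p'"
      unfolding dominated_def by blast
    show ?thesis unfolding xsk by (rule g.core[OF _ ext0 p_strat p' dw]) simp
  next
    assume "iter_dominated A u k p"
    then obtain r p' where p': "p' \<in> mixed_strats (surviving A u r k)"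
      and dw: "dominated_within A u (surviving A u r) k p p'"
      unfolding iter_dominated_def by blast
    have p'': "p' \<in> mixed_strats (A k)" using p' ms_mono[OF surv_sub] by blast
    show ?thesis unfolding xsk by (rule g.core[OF surv_sub g.ext_all p_strat p'' dw])
  qed
qed

end
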